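(* Assume $X_0\in L^\infty$, $\beta\in\mathbb{R}$, $\lambda>0$. Let $w\in\mathscr{W}^{\mathrm{icx}}$. If $w(1)=w(1-)$ and the right derivative $w'$ does not belong to $L^2([0,1))$, then $\inf_{Q\in\mathscr{Q}}L(Q,w;\beta,\lambda)=-\infty$.
   Context: $(\Omega,\mathcal{F},\mathbb{P})$ is a complete nonatomic probability space. $\rho\in L^2$ with $\mathbb{P}(\rho>0)=1$ and $\mathrm{Var}[\rho]>0$. For a random variable $X$, $Q_X(t)=\inf\{y:\mathbb{P}(X\le y)>t\}$ for $t\in[0,1)$, $Q_X(1):=\lim_{t\uparrow1}Q_X(t)$; $Q_0:=Q_{X_0}$. $\mathscr{Q}$ is the set of increasing, right-continuous $Q:[0,1)\to\mathbb{R}$ with $\int_0^1Q^2<\infty$ (extended by $Q(1)=Q(1-)$). $\mathscr{W}^{\mathrm{icx}}$ is the set of increasing convex $w:[0,1]\to[0,\infty)$ with $w(0)=0$; each $w$ is identified with the finite Borel measure on $[0,1]$ with distribution function $w$ (with $w(0-):=0$). Define $$L(Q,w;\beta,\lambda)=\int_0^1(Q(s)-\beta)^2ds+\lambda\int_0^1Q(s)Q_\rho(1-s)ds-\Big(\int_{[0,1]}Q(s)dw(s)-\int_{[0,1]}Q_0(s)dw(s)\Big).$$ *)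

theory Defs
  imports "HOL-Probability.Probability"
begin

definition nonatomic :: "'a measure \<Rightarrow> bool" where
  "nonatomic M \<longleftrightarrow> (\<forall>A\<in>sets M. measure M A > 0 \<longrightarrow>
      (\<exists>B\<in>sets M. B \<subseteq> A \<and> 0 < measure M B \<and> measure M B < measure M A))"

definition quantile0 :: "'a measure \<Rightarrow> ('a \<Rightarrow> real) \<Rightarrow> real \<Rightarrow> real" where
  "quantile0 M X t = Inf {y. measure M {x \<in> space M. X x \<le> y} > t}"

definition quantile :: "'a measure \<Rightarrow> ('a \<Rightarrow> real) \<Rightarrow> real \<Rightarrow> real" where
  "quantile M X t = (if t < 1 then quantile0 M X t else Lim (at_left 1) (quantile0 M X))"

definition Qset :: "(real \<Rightarrow> real) set" where
  "Qset = {Q. mono_on {0..<1} Q \<and> (\<forall>t\<in>{0..<1}. continuous (at_right t) Q)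
              \<and> set_integrable lborel {0..<1} (\<lambda>s. (Q s)\<^sup>2)
              \<and> Q 1 = Lim (at_left 1) Q}"

definition Wicx :: "(real \<Rightarrow> real) set" where
  "Wicx = {w. mono_on {0..1} w \<and> convex_on {0..1} w \<and> w 0 = 0 \<and> (\<forall>s\<in>{0..1}. 0 \<le> w s)}"

definition wmeasure :: "(real \<Rightarrow> real) \<Rightarrow> real measure" where
  "wmeasure w = interval_measure (\<lambda>x. if x < 0 then 0 else if x \<le> 1 then w x else w 1)"

definition rderiv :: "(real \<Rightarrow> real) \<Rightarrow> real \<Rightarrow> real" where
  "rderiv w s = Lim (at_right 0) (\<lambda>h. (w (s + h) - w s) / h)"

definition Lfun :: "'a measure \<Rightarrow> ('a \<Rightarrow> real) \<Rightarrow> ('a \<Rightarrow> real) \<Rightarrow> (real \<Rightarrow> real)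
    \<Rightarrow> (real \<Rightarrow> real) \<Rightarrow> real \<Rightarrow> real \<Rightarrow> real" where
  "Lfun M \<rho> X0 Q w beta lam =
     (LINT s:{0..1}|lborel. (Q s - beta)\<^sup>2)
     + lam * (LINT s:{0..1}|lborel. Q s * quantile M \<rho> (1 - s))
     - ((LINT s:{0..1}|wmeasure w. Q s) - (LINT s:{0..1}|wmeasure w. quantile M X0 s))"

end

theory Submission
  imports Defs
begin


definition dq :: "(real\<Rightarrow>real) \<Rightarrow> real \<Rightarrow> real \<Rightarrow> real" where
  "dq w s h = (w (s+h) - w s) / h"

lemma Wicx_D:
  assumes "w \<in> Wicx"
  shows "mono_on {0..1} w" "convex_on {0..1} w" "w 0 = 0" "\<And>s. s\<in>{0..1} \<Longrightarrow> 0 \<le> w s"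
  using assms by (auto simp: Wicx_def)

lemma slope_mono:
  assumes w: "w \<in> Wicx" and "0 \<le> x" "x < t" "t < y" "y \<le> 1"
  shows "(w t - w x) / (t - x) \<le> (w y - w x) / (y - x)"
    and "(w y - w x) / (y - x) \<le> (w y - w t) / (y - t)"
proof -
  have c: "convex_on {0..1} w" using Wicx_D[OF w] by simp
  have 1: "(w x - w t) / (x - t) \<le> (w x - w y) / (x - y)"
   and 2: "(w x - w y) / (x - y) \<le> (w t - w y) / (t - y)"
    using convex_on_slope_le[OF c, of x y t] assms by auto
  have e: "\<And>a b c d::real. (a - b) / (c - d) = (b - a) / (d - c)"
    by (metis minus_diff_eq minus_divide_divide)
  show "(w t - w x) / (t - x) \<le> (w y - w x) / (y - x)" using 1 e by metis
  show "(w y - w x) / (y - x) \<le> (w y - w t) / (y - t)" using 2 e by metis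
qed

lemma dq_mono:
  assumes w: "w \<in> Wicx" and "0 \<le> s" "0 < h1" "h1 \<le> h2" "s + h2 \<le> 1"
  shows "dq w s h1 \<le> dq w s h2"
proof (cases "h1 = h2")
  case False
  then show ?thesis using slope_mono(1)[OF w, of s "s+h1" "s+h2"] assms
    unfolding dq_def by auto
qed simp

lemma dq_nonneg:
  assumes w: "w \<in> Wicx" and "0 \<le> s" "0 < h" "s + h \<le> 1"
  shows "0 \<le> dq w s h"
proof -
  have "w s \<le> w (s+h)" using Wicx_D(1)[OF w] assms by (auto intro: mono_onD)
  then show ?thesis using assms unfolding dq_def by auto
qed

lemma rderiv_eq:
  assumes w: "w \<in> Wicx" and s: "0 \<le> s" "s < 1"
  shows "rderiv w s = Inf (dq w s ` {0<..1-s})"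
proof -
  define L where "L = Inf (dq w s ` {0<..1-s})"
  have ne: "dq w s ` {0<..1-s} \<noteq> {}" using s by auto
  have bdd: "bdd_below (dq w s ` {0<..1-s})"
    by (rule bdd_belowI[of _ 0]) (use dq_nonneg[OF w] s in auto)
  have "(dq w s \<longlongrightarrow> L) (at_right 0)"
  proof (rule order_tendstoI)
    fix a assume "a < L"
    have "eventually (\<lambda>h. h \<in> {0<..<1-s}) (at_right 0)"
      using s by (intro eventually_at_right_real) simp
    then show "eventually (\<lambda>h. a < dq w s h) (at_right 0)"
    proof eventually_elim
      case (elim h)
      then have "L \<le> dq w s h" unfolding L_def by (intro cInf_lower bdd) auto
      then show ?case using \<open>a < L\<close> by simp
    qed
  next
    fix a assume "L < a"
    then obtain y where y: "y \<in> dq w s ` {0<..1-s}" "y < a"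
      using cInf_lessD[OF ne] unfolding L_def by blast
    then obtain h0 where h0: "h0 \<in> {0<..1-s}" "dq w s h0 < a" by auto
    have "eventually (\<lambda>h. h \<in> {0<..<h0}) (at_right 0)"
      using h0 by (intro eventually_at_right_real) simp
    then show "eventually (\<lambda>h. dq w s h < a) (at_right 0)"
    proof eventually_elim
      case (elim h)
      then have "dq w s h \<le> dq w s h0" using h0 s by (intro dq_mono[OF w]) auto
      then show ?case using h0 by simp
    qed
  qed
  then have "Lim (at_right 0) (dq w s) = L" by (intro tendsto_Lim) auto
  then show ?thesis unfolding rderiv_def L_def dq_def[abs_def] by simp
qed

lemma rderiv_props:
  assumes w: "w \<in> Wicx" and s: "0 \<le> s" "s < 1"
  shows "0 \<le> rderiv w s"
    and "\<And>q. s < q \<Longrightarrow> q \<le> 1 \<Longrightarrow> rderiv w s \<le> (w q - w s) / (q - s)"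
    and "\<And>p q. s < p \<Longrightarrow> p < q \<Longrightarrow> q \<le> 1 \<Longrightarrow> rderiv w s \<le> (w q - w p) / (q - p)"
    and "\<And>p. 0 \<le> p \<Longrightarrow> p < s \<Longrightarrow> (w s - w p) / (s - p) \<le> rderiv w s"
proof -
  have ne: "dq w s ` {0<..1-s} \<noteq> {}" using s by auto
  have bdd: "bdd_below (dq w s ` {0<..1-s})"
    by (rule bdd_belowI[of _ 0]) (use dq_nonneg[OF w] s in auto)
  show "0 \<le> rderiv w s" unfolding rderiv_eq[OF assms]
    by (rule cInf_greatest[OF ne]) (use dq_nonneg[OF w] s in auto)
  show le: "rderiv w s \<le> (w q - w s) / (q - s)" if "s < q" "q \<le> 1" for q
  proof -
    have "rderiv w s \<le> dq w s (q - s)" unfolding rderiv_eq[OF assms]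
      by (rule cInf_lower[OF _ bdd]) (use that in auto)
    then show ?thesis by (simp add: dq_def)
  qed
  show "rderiv w s \<le> (w q - w p) / (q - p)" if "s < p" "p < q" "q \<le> 1" for p q
    using le[of q] slope_mono(2)[OF w, of s p q] that s by auto
  show "(w s - w p) / (s - p) \<le> rderiv w s" if "0 \<le> p" "p < s" for p
    unfolding rderiv_eq[OF assms]
  proof (rule cInf_greatest[OF ne])
    fix y assume "y \<in> dq w s ` {0<..1-s}"
    then obtain h where h: "h \<in> {0<..1-s}" "y = dq w s h" by auto
    have "(w s - w p) / (s - p) \<le> (w (s+h) - w p) / (s + h - p)"
      using slope_mono(1)[OF w, of p s "s+h"] that h by auto
    also have "\<dots> \<le> (w (s+h) - w s) / (s + h - s)"
      using slope_mono(2)[OF w, of p s "s+h"] that h by auto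
    finally show "(w s - w p) / (s - p) \<le> y" using h by (simp add: dq_def)
  qed
qed

lemma rderiv_mono: assumes w: "w \<in> Wicx" shows "mono_on {0..<1} (rderiv w)"
proof (rule mono_onI)
  fix s t :: real assume st: "s \<in> {0..<1}" "t \<in> {0..<1}" "s \<le> t"
  show "rderiv w s \<le> rderiv w t"
  proof (cases "s = t")
    case False
    then have "rderiv w s \<le> (w t - w s) / (t - s)" using rderiv_props(2)[OF w, of s t] st by auto
    also have "\<dots> \<le> rderiv w t" using rderiv_props(4)[OF w, of t s] st False by auto
    finally show ?thesis .
  qed simp
qed



definition aa :: "nat \<Rightarrow> nat \<Rightarrow> real" where "aa n i = 1/2 + real i / (2 * real n)"
definition gg :: "(real\<Rightarrow>real) \<Rightarrow> nat \<Rightarrow> nat \<Rightarrow> real" where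
  "gg w n i = (w (aa n (Suc i)) - w (aa n i)) * (2 * real n)"
definition SS :: "(real\<Rightarrow>real) \<Rightarrow> nat \<Rightarrow> real" where
  "SS w n = (\<Sum>i<n. (gg w n i)\<^sup>2 / (2 * real n))"

lemma aa_Suc: "n \<ge> 1 \<Longrightarrow> aa n (Suc i) = aa n i + 1 / (2 * real n)"
  by (simp add: aa_def add_divide_distrib)

lemma aa_mono: "n \<ge> 1 \<Longrightarrow> i \<le> j \<Longrightarrow> aa n i \<le> aa n j"
  by (simp add: aa_def divide_right_mono)

lemma aa_strict: "n \<ge> 1 \<Longrightarrow> i < j \<Longrightarrow> aa n i < aa n j"
  by (simp add: aa_def divide_strict_right_mono)

lemma aa_0: "aa n 0 = 1/2" by (simp add: aa_def)
lemma aa_n: "n \<ge> 1 \<Longrightarrow> aa n n = 1" by (simp add: aa_def)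
lemma aa_range: "n \<ge> 1 \<Longrightarrow> i \<le> n \<Longrightarrow> 1/2 \<le> aa n i \<and> aa n i \<le> 1"
  using aa_mono[of n 0 i] aa_mono[of n i n] by (simp add: aa_0 aa_n)

lemma gg_slope: "n \<ge> 1 \<Longrightarrow> gg w n i = (w (aa n (Suc i)) - w (aa n i)) / (aa n (Suc i) - aa n i)"
  by (simp add: gg_def aa_Suc)

lemma int_Ico:
  fixes a b c :: real assumes "a \<le> b"
  shows "integrable lborel (\<lambda>s. c * indicator {a..<b} s)"
    and "integral\<^sup>L lborel (\<lambda>s. c * indicator {a..<b} s) = c * (b - a)"
  using assms by (auto simp: measure_lborel_Ico)

lemma core:
  assumes w: "w \<in> Wicx"
    and ni: "\<not> set_integrable lborel {0..<1} (\<lambda>s. (rderiv w s)\<^sup>2)"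
  shows "\<exists>n\<ge>1. SS w n > N"
proof (rule ccontr)
  assume "\<not> ?thesis"
  then have SN: "\<And>n. n \<ge> 1 \<Longrightarrow> SS w n \<le> N" by auto
  define f where "f s = indicator {0..<1} s *\<^sub>R (rderiv w s)\<^sup>2" for s :: real
  have "rderiv w \<in> borel_measurable (restrict_space borel {0..<1})"
    by (rule borel_measurable_mono_on_fnc[OF rderiv_mono[OF w]])
  then have "(\<lambda>s. (rderiv w s)\<^sup>2) \<in> borel_measurable (restrict_space borel {0..<1})"
    by measurable
  then have fm: "f \<in> borel_measurable borel"
    unfolding f_def by (subst (asm) borel_measurable_restrict_space_iff) auto
  then have fm': "f \<in> borel_measurable lborel" by simp
  define D where "D = rderiv w (1/2)"
  define c where "c k = 1 - 1 / (2 * real (Suc k))" for k :: nat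
  define fk where "fk k s = indicator {0..<c k} s * f s" for k s
  have fkm: "fk k \<in> borel_measurable lborel" for k unfolding fk_def using fm' by measurable
  have bound: "integral\<^sup>N lborel (\<lambda>s. ennreal (fk k s)) \<le> ennreal (D\<^sup>2 / 2 + N)" for k
  proof -
    define n where "n = Suc k"
    have n1: "n \<ge> 1" by (simp add: n_def)
    define g where "g s = D\<^sup>2 * indicator {0..<1/2} s +
        (\<Sum>i<n. (gg w n i)\<^sup>2 * indicator {aa n i - 1/(2*real n)..<aa n i} s)" for s
    have intg: "integrable lborel g" and ig: "integral\<^sup>L lborel g = D\<^sup>2 / 2 + SS w n"
    proof -
      have le: "aa n i - 1/(2*real n) \<le> aa n i" for i by simp
      show "integrable lborel g" unfolding g_def
        apply (rule Bochner_Integration.integrable_add)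
         apply (rule int_Ico(1)) apply simp
        apply (rule Bochner_Integration.integrable_sum)
        apply (rule int_Ico(1)) apply (rule le)
        done
      have "integral\<^sup>L lborel g = D\<^sup>2 * (1/2 - 0) + (\<Sum>i<n. (gg w n i)\<^sup>2 * (1/(2*real n)))"
        unfolding g_def
        apply (subst Bochner_Integration.integral_add)
          apply (rule int_Ico(1)) apply simp
         apply (rule Bochner_Integration.integrable_sum)
         apply (rule int_Ico(1)) apply (rule le)
        apply (subst Bochner_Integration.integral_sum)
         apply (rule int_Ico(1)) apply (rule le)
        apply (subst int_Ico(2)) apply simp
        apply (subst int_Ico(2)) apply (rule le)
        apply simp
        done
      then show "integral\<^sup>L lborel g = D\<^sup>2 / 2 + SS w n" by (simp add: SS_def)
    qed
    have pw: "fk k s \<le> g s" for s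
    proof -
      have g0: "0 \<le> g s" unfolding g_def by (intro add_nonneg_nonneg sum_nonneg) auto
      show ?thesis
      proof (cases "s \<in> {0..<c k}")
        case False then show ?thesis using g0 by (simp add: fk_def)
      next
        case True
        have ck: "c k < 1" "c k = 1 - 1/(2*real n)" by (auto simp: c_def n_def)
        have s: "0 \<le> s" "s < 1" using True ck(1) by auto
        have fks: "fk k s = (rderiv w s)\<^sup>2" using True s by (simp add: fk_def f_def)
        have r0: "0 \<le> rderiv w s" by (rule rderiv_props(1)[OF w s])
        show ?thesis
        proof (cases "s < 1/2")
          case True
          have "rderiv w s \<le> D" unfolding D_def
            using mono_onD[OF rderiv_mono[OF w], of s "1/2"] s True by auto
          then have "(rderiv w s)\<^sup>2 \<le> D\<^sup>2" using r0 by (simp add: power_mono)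
          moreover have "D\<^sup>2 * indicator {0..<1/2} s = D\<^sup>2" using True s by simp
          moreover have "0 \<le> (\<Sum>i<n. (gg w n i)\<^sup>2 * indicator {aa n i - 1/(2*real n)..<aa n i} s)"
            by (intro sum_nonneg) auto
          ultimately show ?thesis unfolding fks g_def by linarith
        next
          case False
          define u where "u = (s - 1/2) * (2 * real n)"
          define j where "j = nat \<lfloor>u\<rfloor>"
          have u0: "0 \<le> u" using False by (simp add: u_def)
          have un: "u < real n - 1"
          proof -
            have "s - 1/2 < 1/2 - 1/(2*real n)" using True ck by auto
            then have "(s - 1/2) * (2 * real n) < (1/2 - 1/(2*real n)) * (2 * real n)"
              using n1 by (intro mult_strict_right_mono) auto
            also have "\<dots> = real n - 1" using n1 by (simp add: field_simps)
            finally show ?thesis by (simp add: u_def)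
          qed
          have j1: "real j \<le> u" "u < real j + 1" using u0
            by (auto simp: j_def)
          define i where "i = Suc j"
          have iln: "i < n" using j1 un by (simp add: i_def)
          have sai: "s < aa n i" and ais: "aa n i - 1/(2*real n) \<le> s"
          proof -
            have e: "s = 1/2 + u / (2 * real n)" using n1 by (simp add: u_def)
            show "s < aa n i" unfolding e aa_def i_def using j1 n1
              by (simp add: divide_strict_right_mono)
            show "aa n i - 1/(2*real n) \<le> s" unfolding e aa_def i_def using j1 n1
              by (simp add: divide_right_mono diff_divide_distrib[symmetric])
          qed
          have "rderiv w s \<le> gg w n i"
            unfolding gg_slope[OF n1]
            using rderiv_props(3)[OF w s sai, of "aa n (Suc i)"] aa_strict[OF n1, of i "Suc i"]
              aa_range[OF n1, of "Suc i"] iln by auto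
          then have "(rderiv w s)\<^sup>2 \<le> (gg w n i)\<^sup>2" using r0 by (simp add: power_mono)
          also have "\<dots> = (gg w n i)\<^sup>2 * indicator {aa n i - 1/(2*real n)..<aa n i} s"
            using sai ais by simp
          also have "\<dots> \<le> (\<Sum>i<n. (gg w n i)\<^sup>2 * indicator {aa n i - 1/(2*real n)..<aa n i} s)"
            by (rule member_le_sum[of i "{..<n}" "\<lambda>i. (gg w n i)\<^sup>2 * indicator {aa n i - 1/(2*real n)..<aa n i} s"])
               (use iln in auto)
          also have "\<dots> \<le> g s" unfolding g_def by simp
          finally show ?thesis unfolding fks .
        qed
      qed
    qed
    have "integral\<^sup>N lborel (\<lambda>s. ennreal (fk k s)) \<le> integral\<^sup>N lborel (\<lambda>s. ennreal (g s))"
      by (intro nn_integral_mono) (simp add: pw ennreal_leI)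
    also have "\<dots> = ennreal (integral\<^sup>L lborel g)"
      by (rule nn_integral_eq_integral[OF intg]) (auto simp: g_def intro!: add_nonneg_nonneg sum_nonneg)
    also have "\<dots> \<le> ennreal (D\<^sup>2 / 2 + N)" unfolding ig using SN[OF n1] by (simp add: ennreal_leI)
    finally show ?thesis .
  qed
  have inc: "incseq (\<lambda>k s. ennreal (fk k s))"
  proof (rule incseq_SucI, rule le_funI)
    fix k s
    have "c k \<le> c (Suc k)" unfolding c_def by (simp add: frac_le)
    then show "ennreal (fk k s) \<le> ennreal (fk (Suc k) s)"
      by (auto simp: fk_def f_def indicator_def intro!: ennreal_leI)
  qed
  have sup: "ennreal (f s) = (SUP k. ennreal (fk k s))" for s
  proof (rule antisym)
    show "(SUP k. ennreal (fk k s)) \<le> ennreal (f s)"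
      by (intro SUP_least ennreal_leI) (auto simp: fk_def f_def indicator_def)
    show "ennreal (f s) \<le> (SUP k. ennreal (fk k s))"
    proof (cases "s \<in> {0..<1}")
      case True
      obtain m where m: "m > 0" "inverse (real m) < 2 * (1 - s)"
        using True ex_inverse_of_nat_less[of "2 * (1 - s)"] by auto
      define k where "k = m - 1"
      have k: "inverse (real (Suc k)) < 2 * (1 - s)" using m by (simp add: k_def)
      have "s < c k" using k by (simp add: c_def field_simps)
      then have "ennreal (f s) = ennreal (fk k s)" using True by (simp add: fk_def)
      then show ?thesis using SUP_upper[of k UNIV "\<lambda>k. ennreal (fk k s)"] by simp
    qed (simp add: f_def)
  qed
  have "integral\<^sup>N lborel (\<lambda>s. ennreal (f s)) = (SUP k. integral\<^sup>N lborel (\<lambda>s. ennreal (fk k s)))"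
    unfolding sup
    by (rule nn_integral_monotone_convergence_SUP[OF inc]) (use fkm in simp)
  also have "\<dots> \<le> ennreal (D\<^sup>2 / 2 + N)" by (intro SUP_least bound)
  finally have le: "integral\<^sup>N lborel (\<lambda>s. ennreal (f s)) \<le> ennreal (D\<^sup>2 / 2 + N)" .
  have "integral\<^sup>N lborel (\<lambda>s. ennreal (f s)) < \<infinity>"
    by (rule le_less_trans[OF le]) simp
  then have "integrable lborel f"
    by (intro integrableI_nonneg fm') (auto simp: f_def)
  then show False using ni unfolding set_integrable_def f_def by simp
qed



lemma quant_bound:
  assumes P: "prob_space M" and rm: "\<rho> \<in> borel_measurable M" and pos: "AE x in M. \<rho> x > 0"
  shows "\<exists>K\<ge>0. \<forall>t\<in>{0..1/2}. quantile0 M \<rho> t \<le> K"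
proof -
  interpret prob_space M by (rule P)
  define S where "S t = {y. measure M {x\<in>space M. \<rho> x \<le> y} > t}" for t
  have pos_el: "y > 0" if "y \<in> S t" "t \<ge> 0" for y t
  proof (rule ccontr)
    assume "\<not> y > 0"
    have "AE x in M. \<not> \<rho> x \<le> y" using pos by eventually_elim (use \<open>\<not> y > 0\<close> in auto)
    then have "emeasure M {x\<in>space M. \<rho> x \<le> y} = 0" by (rule emeasure_eq_0_AE)
    then have "measure M {x\<in>space M. \<rho> x \<le> y} = 0" by (simp add: measure_def)
    then show False using that by (simp add: S_def)
  qed
  have bdd: "bdd_below (S t)" if "t \<ge> 0" for t
    by (rule bdd_belowI[of _ 0]) (use pos_el that in force)
  define A where "A i = {x\<in>space M. \<rho> x \<le> real i}" for i :: nat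
  have "(\<lambda>i. measure M (A i)) \<longlonglongrightarrow> measure M (\<Union>i. A i)"
    by (rule finite_Lim_measure_incseq) (use rm in \<open>auto simp: A_def incseq_def intro: order_trans\<close>)
  moreover have "(\<Union>i. A i) = space M"
    by (auto simp: A_def intro: real_arch_simple)
  ultimately have "(\<lambda>i. measure M (A i)) \<longlonglongrightarrow> 1" by (simp add: prob_space)
  then have "eventually (\<lambda>i. measure M (A i) > 1/2) sequentially"
    by (rule order_tendstoD) simp
  then obtain i where "measure M (A i) > 1/2" by (metis eventually_sequentially order_refl)
  then have ne: "real i \<in> S (1/2)" by (simp add: S_def A_def)
  define K where "K = Inf (S (1/2))"
  have "K \<ge> 0" unfolding K_def
    by (rule cInf_greatest) (use ne pos_el in \<open>auto intro: less_imp_le\<close>)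
  moreover have "quantile0 M \<rho> t \<le> K" if "t \<in> {0..1/2}" for t
  proof -
    have "S (1/2) \<subseteq> S t" using that by (auto simp: S_def)
    then have "Inf (S t) \<le> Inf (S (1/2))"
      by (intro cInf_superset_mono) (use ne bdd that in auto)
    then show ?thesis by (simp add: quantile0_def K_def S_def)
  qed
  ultimately show ?thesis by blast
qed



definition cc :: "(real\<Rightarrow>real) \<Rightarrow> nat \<Rightarrow> nat \<Rightarrow> real" where "cc w n i = gg w n i / 2"
definition QQ :: "(real\<Rightarrow>real) \<Rightarrow> nat \<Rightarrow> real \<Rightarrow> real" where
  "QQ w n s = (\<Sum>i<n. cc w n i * indicator {aa n i..<aa n (Suc i)} s) + cc w n (n-1) * indicator {1..} s"

lemma gg_nonneg: assumes w: "w \<in> Wicx" and n: "n \<ge> 1" "i < n" shows "0 \<le> gg w n i"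
proof -
  have "w (aa n i) \<le> w (aa n (Suc i))"
    using aa_range[OF n(1), of i] aa_range[OF n(1), of "Suc i"] aa_mono[OF n(1), of i "Suc i"] n
    by (intro mono_onD[OF Wicx_D(1)[OF w]]) auto
  then show ?thesis by (simp add: gg_def)
qed

lemma gg_Suc: assumes w: "w \<in> Wicx" and n: "n \<ge> 1" "Suc i < n" shows "gg w n i \<le> gg w n (Suc i)"
proof -
  have r: "1/2 \<le> aa n i" "aa n (Suc (Suc i)) \<le> 1" using aa_range[OF n(1)] n by auto
  have s: "aa n i < aa n (Suc i)" "aa n (Suc i) < aa n (Suc (Suc i))" using aa_strict[OF n(1)] by auto
  have "(w (aa n (Suc i)) - w (aa n i)) / (aa n (Suc i) - aa n i)
      \<le> (w (aa n (Suc (Suc i))) - w (aa n i)) / (aa n (Suc (Suc i)) - aa n i)"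
    by (rule slope_mono(1)[OF w]) (use r s in auto)
  also have "\<dots> \<le> (w (aa n (Suc (Suc i))) - w (aa n (Suc i))) / (aa n (Suc (Suc i)) - aa n (Suc i))"
    by (rule slope_mono(2)[OF w]) (use r s in auto)
  finally show ?thesis unfolding gg_slope[OF n(1)] .
qed

lemma gg_mono: assumes w: "w \<in> Wicx" and n: "n \<ge> 1" and ij: "i \<le> j" "j < n"
  shows "gg w n i \<le> gg w n j"
proof -
  have "gg w n i \<le> gg w n (i + d)" if "i + d < n" for d
    using that
  proof (induction d)
    case (Suc d)
    then have "gg w n i \<le> gg w n (i + d)" by simp
    also have "\<dots> \<le> gg w n (Suc (i + d))" using Suc.prems by (intro gg_Suc[OF w n]) simp
    finally show ?case by simp
  qed simp
  from this[of "j - i"] ij show ?thesis by simp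
qed

lemma sum_collapse:
  fixes c :: "nat \<Rightarrow> real"
  assumes "i < n" "s \<in> I i" "\<And>j. j < n \<Longrightarrow> j \<noteq> i \<Longrightarrow> s \<notin> I j"
  shows "(\<Sum>j<n. c j * indicator (I j) s) = c i"
proof -
  have "(\<Sum>j<n. c j * indicator (I j) s) = (\<Sum>j<n. if j = i then c i else 0)"
    by (rule sum.cong) (use assms in auto)
  also have "\<dots> = c i" using assms(1) by simp
  finally show ?thesis .
qed

lemma Ico_disj: assumes n: "n \<ge> 1" and "s \<in> {aa n i..<aa n (Suc i)}" "s \<in> {aa n j..<aa n (Suc j)}"
  shows "i = j"
proof (rule ccontr)
  assume "i \<noteq> j"
  then consider "Suc i \<le> j" | "Suc j \<le> i" by linarith
  then show False
  proof cases
    case 1 then show ?thesis using aa_mono[OF n 1] assms by auto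
  next
    case 2 then show ?thesis using aa_mono[OF n 2] assms by auto
  qed
qed

lemma Ioc_disj: assumes n: "n \<ge> 1" and "s \<in> {aa n i<..aa n (Suc i)}" "s \<in> {aa n j<..aa n (Suc j)}"
  shows "i = j"
proof (rule ccontr)
  assume "i \<noteq> j"
  then consider "Suc i \<le> j" | "Suc j \<le> i" by linarith
  then show False
  proof cases
    case 1 then show ?thesis using aa_mono[OF n 1] assms by auto
  next
    case 2 then show ?thesis using aa_mono[OF n 2] assms by auto
  qed
qed

lemma QQ_eval: assumes n: "n \<ge> 1" and i: "i < n" and s: "s \<in> {aa n i..<aa n (Suc i)}"
  shows "QQ w n s = cc w n i"
proof -
  have "aa n (Suc i) \<le> 1" using aa_range[OF n, of "Suc i"] i by simp
  then have "indicator {1..} s = (0::real)" using s by auto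
  moreover have "(\<Sum>j<n. cc w n j * indicator {aa n j..<aa n (Suc j)} s) = cc w n i"
    by (rule sum_collapse[where I="\<lambda>j. {aa n j..<aa n (Suc j)}", OF i s]) (use Ico_disj[OF n] s in blast)
  ultimately show ?thesis by (simp add: QQ_def)
qed

lemma QQ_low: assumes n: "n \<ge> 1" and s: "s < 1/2" shows "QQ w n s = 0"
proof -
  have "indicator {aa n j..<aa n (Suc j)} s = (0::real)" for j
  proof -
    have "1/2 \<le> aa n j" using aa_mono[OF n, of 0 j] by (simp add: aa_0)
    then show ?thesis using s by (simp add: indicator_def)
  qed
  then show ?thesis using s by (simp add: QQ_def)
qed

lemma QQ_high: assumes n: "n \<ge> 1" and s: "1 \<le> s" shows "QQ w n s = cc w n (n-1)"
proof -
  have "indicator {aa n j..<aa n (Suc j)} s = (0::real)" if "j < n" for j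
    using aa_range[OF n, of "Suc j"] that s by auto
  then show ?thesis using s by (simp add: QQ_def)
qed

lemma idx_exists: assumes n: "n \<ge> 1" and s: "1/2 \<le> s" "s < 1"
  shows "\<exists>i<n. s \<in> {aa n i..<aa n (Suc i)}"
proof -
  define u where "u = (s - 1/2) * (2 * real n)"
  define i where "i = nat \<lfloor>u\<rfloor>"
  have u0: "0 \<le> u" using s by (simp add: u_def)
  have un: "u < real n" using s n by (simp add: u_def)
  have j1: "real i \<le> u" "u < real i + 1" using u0 by (auto simp: i_def)
  have e: "s = 1/2 + u / (2 * real n)" using n by (simp add: u_def)
  have "s \<in> {aa n i..<aa n (Suc i)}" unfolding e aa_def using j1 n
    by (auto simp: divide_strict_right_mono divide_right_mono)
  moreover have "i < n" using j1 un by simp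
  ultimately show ?thesis by blast
qed

lemma QQ_cases: assumes n: "n \<ge> 1"
  shows "QQ w n s = 0 \<or> (\<exists>i<n. QQ w n s = cc w n i) \<or> QQ w n s = cc w n (n-1)"
proof -
  consider "s < 1/2" | "1/2 \<le> s \<and> s < 1" | "1 \<le> s" by linarith
  then show ?thesis
  proof cases
    case 2 then obtain i where "i < n" "s \<in> {aa n i..<aa n (Suc i)}" using idx_exists[OF n] by blast
    then show ?thesis using QQ_eval[OF n] by blast
  qed (use QQ_low[OF n] QQ_high[OF n] in auto)
qed

lemma QQ_bounds: assumes w: "w \<in> Wicx" and n: "n \<ge> 1"
  shows "0 \<le> QQ w n s" "QQ w n s \<le> cc w n (n-1)"
proof -
  have c0: "0 \<le> cc w n i" if "i < n" for i using gg_nonneg[OF w n that] by (simp add: cc_def)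
  have cl: "cc w n i \<le> cc w n (n-1)" if "i < n" for i
    using gg_mono[OF w n, of i "n-1"] that by (simp add: cc_def)
  have "n - 1 < n" using n by simp
  then show "0 \<le> QQ w n s" "QQ w n s \<le> cc w n (n-1)"
    using QQ_cases[OF n, of w s] c0 cl by auto
qed

lemma QQ_mono: assumes w: "w \<in> Wicx" and n: "n \<ge> 1"
  shows "mono_on {0..1} (QQ w n)"
proof (rule mono_onI)
  fix s t :: real assume st: "s \<in> {0..1}" "t \<in> {0..1}" "s \<le> t"
  show "QQ w n s \<le> QQ w n t"
  proof (cases "s < 1/2")
    case True then show ?thesis using QQ_low[OF n True] QQ_bounds[OF w n] by simp
  next
    case False
    show ?thesis
    proof (cases "t < 1")
      case False then show ?thesis using QQ_high[OF n] QQ_bounds(2)[OF w n] by simp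
    next
      case True
      have s1: "1/2 \<le> s" "s < 1" "1/2 \<le> t" using False st True by auto
      obtain i where i: "i < n" "s \<in> {aa n i..<aa n (Suc i)}"
        using idx_exists[OF n s1(1,2)] by blast
      obtain j where j: "j < n" "t \<in> {aa n j..<aa n (Suc j)}"
        using idx_exists[OF n s1(3) True] by blast
      have "i \<le> j"
      proof (rule ccontr)
        assume "\<not> i \<le> j"
        then have sj: "Suc j \<le> i" by simp
        show False using aa_mono[OF n sj] i j st by auto
      qed
      then show ?thesis using QQ_eval[OF n i(1,2), of w] QQ_eval[OF n j(1,2), of w] gg_mono[OF w n \<open>i \<le> j\<close> j(1)]
        by (simp add: cc_def)
    qed
  qed
qed

lemma QQ_meas: "QQ w n \<in> borel_measurable borel"
  unfolding QQ_def by measurable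



lemma rc_Ico: "continuous (at_right t) (indicator {a..<b} :: real \<Rightarrow> real)"
  unfolding continuous_within
proof (rule tendsto_eventually)
  consider "t < a" | "a \<le> t \<and> t < b" | "b \<le> t" by linarith
  then show "eventually (\<lambda>x. indicator {a..<b} x = (indicator {a..<b} t :: real)) (at_right t)"
  proof cases
    case 1
    show ?thesis using eventually_at_right_real[OF 1] by eventually_elim (use 1 in auto)
  next
    case 2
    then have tb: "t < b" by simp
    show ?thesis using eventually_at_right_real[OF tb] by eventually_elim (use 2 in auto)
  next
    case 3
    show ?thesis using eventually_at_right_less[of t] by eventually_elim (use 3 in auto)
  qed
qed

lemma rc_Ici: "continuous (at_right t) (indicator {a..} :: real \<Rightarrow> real)"
  unfolding continuous_within
proof (rule tendsto_eventually)
  consider "t < a" | "a \<le> t" by linarith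
  then show "eventually (\<lambda>x. indicator {a..} x = (indicator {a..} t :: real)) (at_right t)"
  proof cases
    case 1
    show ?thesis using eventually_at_right_real[OF 1] by eventually_elim (use 1 in auto)
  next
    case 2
    show ?thesis using eventually_at_right_less[of t] by eventually_elim (use 2 in auto)
  qed
qed

lemma QQ_rc: "continuous (at_right t) (QQ w n)"
proof -
  have "continuous (at_right t) (\<lambda>s. (\<Sum>i<n. cc w n i * indicator {aa n i..<aa n (Suc i)} s) + cc w n (n-1) * indicator {1..} s)"
    by (intro continuous_add continuous_sum continuous_mult continuous_const rc_Ico rc_Ici)
  then show ?thesis unfolding QQ_def[abs_def] .
qed

lemma QQ_Lim: assumes n: "n \<ge> 1" shows "QQ w n 1 = Lim (at_left 1) (QQ w n)"
proof -
  have lt: "aa n (n-1) < 1" using aa_strict[OF n, of "n-1" n] aa_n[OF n] n by simp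
  have "eventually (\<lambda>s. QQ w n s = cc w n (n-1)) (at_left 1)"
    using eventually_at_left_real[OF lt]
  proof eventually_elim
    case (elim s)
    have "s \<in> {aa n (n-1)..<aa n (Suc (n-1))}" using elim n aa_n[OF n] by auto
    then show ?case using QQ_eval[OF n, of "n-1"] n by simp
  qed
  then have "(QQ w n \<longlongrightarrow> cc w n (n-1)) (at_left 1)" by (rule tendsto_eventually)
  then have "Lim (at_left 1) (QQ w n) = cc w n (n-1)" by (intro tendsto_Lim) auto
  then show ?thesis using QQ_high[OF n, of 1] by simp
qed

lemma QQ_Qset: assumes w: "w \<in> Wicx" and n: "n \<ge> 1" shows "QQ w n \<in> Qset"
proof -
  have mo: "mono_on {0..<1} (QQ w n)" by (rule mono_on_subset[OF QQ_mono[OF w n]]) auto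
  have m2: "(\<lambda>x. (QQ w n x)\<^sup>2) \<in> borel_measurable borel"
    using QQ_meas[of w n] by measurable
  moreover have "set_integrable lborel {0..<1} (\<lambda>s. (QQ w n s)\<^sup>2)"
    unfolding set_integrable_def
    by (rule integrableI_bounded_set_indicator[where B="(cc w n (n-1))\<^sup>2"])
       (use QQ_bounds[OF w n] m2 in \<open>auto intro!: power_mono\<close>)
  ultimately show ?thesis unfolding Qset_def using mo QQ_rc QQ_Lim[OF n] by auto
qed



definition wF :: "(real\<Rightarrow>real) \<Rightarrow> real \<Rightarrow> real" where
  "wF w x = (if x < 0 then 0 else if x \<le> 1 then w x else w 1)"

lemma wmeasure_wF: "wmeasure w = interval_measure (wF w)"
  by (simp add: wmeasure_def wF_def[abs_def])

lemma wF_mono: assumes w: "w \<in> Wicx" shows "x \<le> y \<Longrightarrow> wF w x \<le> wF w y"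
  using Wicx_D(4)[OF w] mono_onD[OF Wicx_D(1)[OF w]]
  by (auto simp: wF_def)

lemma w_le_lin: assumes w: "w \<in> Wicx" and y: "0 \<le> y" "y \<le> 1" shows "w y \<le> y * w 1"
proof -
  have "w ((1 - y) *\<^sub>R 0 + y *\<^sub>R 1) \<le> (1 - y) * w 0 + y * w 1"
    by (rule convex_onD[OF Wicx_D(2)[OF w]]) (use y in auto)
  then show ?thesis using Wicx_D(3)[OF w] by simp
qed

lemma wF_rc: assumes w: "w \<in> Wicx" shows "continuous (at_right x) (wF w)"
  unfolding continuous_within
proof -
  consider "x < 0" | "x = 0" | "0 < x \<and> x < 1" | "1 \<le> x" by linarith
  then show "(wF w \<longlongrightarrow> wF w x) (at_right x)"
  proof cases
    case 1
    show ?thesis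
      by (rule tendsto_eventually, use eventually_at_right_real[OF 1] in eventually_elim)
         (use 1 in \<open>auto simp: wF_def\<close>)
  next
    case 4
    show ?thesis
      by (rule tendsto_eventually, use eventually_at_right_less[of x] in eventually_elim)
         (use 4 in \<open>auto simp: wF_def\<close>)
  next
    case 2
    have ev: "eventually (\<lambda>y. y \<in> {0<..<1}) (at_right (0::real))"
      by (rule eventually_at_right_real) simp
    have "(wF w \<longlongrightarrow> 0) (at_right 0)"
    proof (rule tendsto_sandwich[of "\<lambda>_. 0" _ _ "\<lambda>y. y * w 1"])
      show "eventually (\<lambda>y. 0 \<le> wF w y) (at_right 0)"
        using ev by eventually_elim (use Wicx_D(4)[OF w] in \<open>auto simp: wF_def\<close>)
      show "eventually (\<lambda>y. wF w y \<le> y * w 1) (at_right 0)"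
        using ev by eventually_elim (use w_le_lin[OF w] in \<open>auto simp: wF_def\<close>)
      show "((\<lambda>y. y * w 1) \<longlongrightarrow> 0) (at_right 0)"
        by (rule tendsto_mult_left_zero) (rule tendsto_ident_at)
    qed simp
    then show ?thesis using 2 Wicx_D(3)[OF w] by (simp add: wF_def)
  next
    case 3
    have "convex_on {0<..<1} w"
      by (rule convex_on_subset[OF Wicx_D(2)[OF w]]) auto
    then have "continuous_on {0<..<1} w" by (intro convex_on_continuous) auto
    then have "isCont w x" using 3 by (simp add: continuous_on_eq_continuous_at)
    then have "continuous (at_right x) w" using continuous_at_split by blast
    then have t: "(w \<longlongrightarrow> w x) (at_right x)" by (simp add: continuous_within)
    have x1: "x < 1" using 3 by simp
    have ev: "eventually (\<lambda>y. wF w y = w y) (at_right x)"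
      using eventually_at_right_real[OF x1] by eventually_elim (use 3 in \<open>auto simp: wF_def\<close>)
    have "wF w x = w x" using 3 by (simp add: wF_def)
    then show ?thesis using tendsto_cong[OF ev] t by simp
  qed
qed

lemma wF_bot: "(wF w \<longlongrightarrow> 0) at_bot"
  by (rule tendsto_eventually) (auto simp: eventually_at_bot_linorder wF_def intro!: exI[of _ "-1"])

lemma wF_top: "(wF w \<longlongrightarrow> w 1) at_top"
  by (rule tendsto_eventually) (auto simp: eventually_at_top_linorder wF_def intro!: exI[of _ "2"])

lemma wmeasure_finite: assumes w: "w \<in> Wicx" shows "finite_measure (wmeasure w)"
proof -
  have "finite_borel_measure (interval_measure (wF w))"
    by (rule finite_borel_measure_interval_measure[OF wF_mono[OF w] wF_rc[OF w] wF_bot wF_top])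
       (use Wicx_D(4)[OF w] in auto)
  then show ?thesis unfolding wmeasure_wF by (simp add: finite_borel_measure_def)
qed

lemma wmeasure_Ioc: assumes w: "w \<in> Wicx" and "0 \<le> a" "a \<le> b" "b \<le> 1"
  shows "measure (wmeasure w) {a<..b} = w b - w a"
  unfolding wmeasure_wF using assms
  by (subst measure_interval_measure_Ioc[OF _ wF_mono[OF w] wF_rc[OF w]]) (auto simp: wF_def)

lemma I3:
  assumes w: "w \<in> Wicx" and n: "n \<ge> 1"
  shows "set_integrable (wmeasure w) {0..1} (QQ w n)"
    and "(\<Sum>i<n. cc w n i * (w (aa n (Suc i)) - w (aa n i))) \<le> (LINT s:{0..1}|wmeasure w. QQ w n s)"
proof -
  interpret fm: finite_measure "wmeasure w" by (rule wmeasure_finite[OF w])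
  have sets: "sets (wmeasure w) = sets borel" by (simp add: wmeasure_wF)
  have fin: "emeasure (wmeasure w) A < \<top>" for A using fm.emeasure_finite[of A] by (simp add: less_top[symmetric])
  have Qm: "QQ w n \<in> borel_measurable (wmeasure w)"
    using QQ_meas[of w n] measurable_cong_sets[OF sets refl] by blast
  show si: "set_integrable (wmeasure w) {0..1} (QQ w n)"
    unfolding set_integrable_def
    by (rule integrableI_bounded_set_indicator[where B="cc w n (n-1)"])
       (use QQ_bounds[OF w n] Qm sets in \<open>auto simp: fin\<close>)
  define h where "h s = (\<Sum>i<n. cc w n i * indicator {aa n i<..aa n (Suc i)} s)" for s
  have ii: "integrable (wmeasure w) (\<lambda>s. cc w n i * indicator {aa n i<..aa n (Suc i)} s)" for i
    using sets by (intro integrable_mult_right integrable_real_indicator) (auto simp: fin)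
  have hi: "integrable (wmeasure w) h" unfolding h_def[abs_def]
    by (rule Bochner_Integration.integrable_sum) (rule ii)
  have "integral\<^sup>L (wmeasure w) h = (\<Sum>i<n. cc w n i * measure (wmeasure w) {aa n i<..aa n (Suc i)})"
    unfolding h_def[abs_def]
    apply (subst Bochner_Integration.integral_sum) apply (rule ii)
    apply (rule sum.cong) apply (rule refl)
    using sets by simp
  also have "\<dots> = (\<Sum>i<n. cc w n i * (w (aa n (Suc i)) - w (aa n i)))"
  proof (rule sum.cong[OF refl])
    fix i assume "i \<in> {..<n}"
    then have "0 \<le> aa n i" "aa n i \<le> aa n (Suc i)" "aa n (Suc i) \<le> 1"
      using aa_range[OF n, of i] aa_range[OF n, of "Suc i"] aa_mono[OF n, of i "Suc i"] by auto
    then show "cc w n i * measure (wmeasure w) {aa n i<..aa n (Suc i)} = cc w n i * (w (aa n (Suc i)) - w (aa n i))"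
      using wmeasure_Ioc[OF w] by simp
  qed
  finally have ih: "integral\<^sup>L (wmeasure w) h = (\<Sum>i<n. cc w n i * (w (aa n (Suc i)) - w (aa n i)))" .
  have pw: "h s \<le> indicator {0..1} s *\<^sub>R QQ w n s" for s
  proof (cases "\<exists>i<n. s \<in> {aa n i<..aa n (Suc i)}")
    case True
    then obtain i where i: "i < n" "s \<in> {aa n i<..aa n (Suc i)}" by blast
    have hs: "h s = cc w n i" unfolding h_def
      by (rule sum_collapse[where I="\<lambda>j. {aa n j<..aa n (Suc j)}", OF i]) (use Ioc_disj[OF n] i in blast)
    have r: "1/2 \<le> aa n i" "aa n i \<le> 1" "aa n (Suc i) \<le> 1" "aa n i < aa n (Suc i)"
      using aa_range[OF n, of i] aa_range[OF n, of "Suc i"] aa_strict[OF n, of i "Suc i"] i by auto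
    have s01: "s \<in> {0..1}" using i r by auto
    have "cc w n i = QQ w n (aa n i)" using QQ_eval[OF n i(1), of "aa n i" w] r by simp
    also have "\<dots> \<le> QQ w n s" using mono_onD[OF QQ_mono[OF w n], of "aa n i" s] i r s01 by auto
    finally show ?thesis using hs s01 by simp
  next
    case False
    then have "h s = 0" unfolding h_def by (intro sum.neutral) auto
    then show ?thesis using QQ_bounds(1)[OF w n, of s] by (simp add: indicator_def)
  qed
  have "integral\<^sup>L (wmeasure w) h \<le> (LINT s:{0..1}|wmeasure w. QQ w n s)"
    unfolding set_lebesgue_integral_def
    by (rule integral_mono[OF hi si[unfolded set_integrable_def] pw])
  then show "(\<Sum>i<n. cc w n i * (w (aa n (Suc i)) - w (aa n i))) \<le> (LINT s:{0..1}|wmeasure w. QQ w n s)"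
    using ih by simp
qed



lemma int_sum_Ico:
  assumes n: "n \<ge> 1"
  shows "integrable lborel (\<lambda>s. \<Sum>i<n. d i * indicator {aa n i..<aa n (Suc i)} s)"
    and "integral\<^sup>L lborel (\<lambda>s. \<Sum>i<n. d i * indicator {aa n i..<aa n (Suc i)} s) = (\<Sum>i<n. d i * (1 / (2 * real n)))"
proof -
  have le: "aa n i \<le> aa n (Suc i)" for i using aa_mono[OF n, of i "Suc i"] by simp
  show "integrable lborel (\<lambda>s. \<Sum>i<n. d i * indicator {aa n i..<aa n (Suc i)} s)"
    by (rule Bochner_Integration.integrable_sum) (rule int_Ico(1)[OF le])
  show "integral\<^sup>L lborel (\<lambda>s. \<Sum>i<n. d i * indicator {aa n i..<aa n (Suc i)} s) = (\<Sum>i<n. d i * (1 / (2 * real n)))"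
    apply (subst Bochner_Integration.integral_sum) apply (rule int_Ico(1)[OF le])
    apply (rule sum.cong[OF refl])
    apply (subst int_Ico(2)[OF le])
    using aa_Suc[OF n] by simp
qed

lemma I1:
  assumes w: "w \<in> Wicx" and n: "n \<ge> 1"
  shows "(LINT s:{0..1}|lborel. (QQ w n s - beta)\<^sup>2) \<le> beta\<^sup>2 + (\<Sum>i<n. (cc w n i - beta)\<^sup>2 * (1 / (2 * real n)))"
proof -
  define r where "r s = beta\<^sup>2 * indicator {0..<1} s + (\<Sum>i<n. (cc w n i - beta)\<^sup>2 * indicator {aa n i..<aa n (Suc i)} s)" for s
  have ri: "integrable lborel r" unfolding r_def[abs_def]
    by (rule Bochner_Integration.integrable_add[OF int_Ico(1) int_sum_Ico(1)[OF n]]) simp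
  have rv: "integral\<^sup>L lborel r = beta\<^sup>2 + (\<Sum>i<n. (cc w n i - beta)\<^sup>2 * (1 / (2 * real n)))"
    unfolding r_def[abs_def]
    apply (subst Bochner_Integration.integral_add[OF int_Ico(1) int_sum_Ico(1)[OF n]]) apply simp
    apply (subst int_sum_Ico(2)[OF n])
    apply (subst int_Ico(2)) apply simp
    apply simp
    done
  have m2: "(\<lambda>x. (QQ w n x - beta)\<^sup>2) \<in> borel_measurable lborel"
    using QQ_meas[of w n] by measurable
  have bnd: "\<bar>QQ w n x - beta\<bar> \<le> cc w n (n-1) + \<bar>beta\<bar>" for x
    using QQ_bounds[OF w n, of x] by linarith
  have cnn: "0 \<le> cc w n (n-1)" using gg_nonneg[OF w n, of "n-1"] n by (simp add: cc_def)
  have bnd2: "\<bar>QQ w n x - beta\<bar> \<le> \<bar>cc w n (n-1) + \<bar>beta\<bar>\<bar>" for x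
    using bnd[of x] cnn by simp
  have li: "integrable lborel (\<lambda>s. indicator {0..1} s *\<^sub>R (QQ w n s - beta)\<^sup>2)"
    by (rule integrableI_bounded_set_indicator[where B="(cc w n (n-1) + \<bar>beta\<bar>)\<^sup>2"])
       (use m2 bnd2 in \<open>auto intro!: power_mono simp: abs_le_square_iff[symmetric] power_abs\<close>)
  have pw: "indicator {0..1} s *\<^sub>R (QQ w n s - beta)\<^sup>2 \<le> r s" if s1: "s \<noteq> 1" for s
  proof -
    have r0: "0 \<le> (\<Sum>i<n. (cc w n i - beta)\<^sup>2 * indicator {aa n i..<aa n (Suc i)} s)"
      by (intro sum_nonneg) auto
    consider "s \<notin> {0..1}" | "s \<in> {0..<1}" "s < 1/2" | "1/2 \<le> s" "s < 1" using s1 by fastforce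
    then show ?thesis
    proof cases
      case 1
      then have "indicator {0..1} s = (0::real)" "indicator {0..<1} s = (0::real)" by auto
      then show ?thesis using r0 by (simp add: r_def)
    next
      case 2 then show ?thesis using r0 QQ_low[OF n, of s w] by (simp add: r_def)
    next
      case 3
      obtain i where i: "i < n" "s \<in> {aa n i..<aa n (Suc i)}" using idx_exists[OF n 3] by blast
      have "(QQ w n s - beta)\<^sup>2 = (cc w n i - beta)\<^sup>2 * indicator {aa n i..<aa n (Suc i)} s"
        using QQ_eval[OF n i, of w] i by simp
      also have "\<dots> \<le> (\<Sum>i<n. (cc w n i - beta)\<^sup>2 * indicator {aa n i..<aa n (Suc i)} s)"
        by (rule member_le_sum[of i "{..<n}" "\<lambda>i. (cc w n i - beta)\<^sup>2 * indicator {aa n i..<aa n (Suc i)} s"])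
           (use i in auto)
      finally have "(QQ w n s - beta)\<^sup>2 \<le> (\<Sum>i<n. (cc w n i - beta)\<^sup>2 * indicator {aa n i..<aa n (Suc i)} s)" .
      moreover have "indicator {0..1} s = (1::real)" "indicator {0..<1} s = (1::real)" using 3 by auto
      ultimately show ?thesis unfolding r_def
        by (simp add: add_increasing)
    qed
  qed
  have "(LINT s:{0..1}|lborel. (QQ w n s - beta)\<^sup>2) \<le> integral\<^sup>L lborel r"
    unfolding set_lebesgue_integral_def
    by (rule integral_mono_AE[OF li ri]) (use AE_lborel_singleton[of 1] in \<open>eventually_elim, use pw in auto\<close>)
  then show ?thesis using rv by simp
qed

lemma I2:
  assumes w: "w \<in> Wicx" and n: "n \<ge> 1" and K: "K \<ge> 0" and R: "\<And>s. s \<in> {1/2..1} \<Longrightarrow> Rf s \<le> K"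
  shows "(LINT s:{0..1}|lborel. QQ w n s * Rf s) \<le> K * (\<Sum>i<n. cc w n i * (1 / (2 * real n)))"
proof -
  have c0: "0 \<le> cc w n i" if "i < n" for i using gg_nonneg[OF w n that] by (simp add: cc_def)
  have rhs0: "0 \<le> K * (\<Sum>i<n. cc w n i * (1 / (2 * real n)))"
    using K c0 by (intro mult_nonneg_nonneg sum_nonneg) auto
  show ?thesis
  proof (cases "set_integrable lborel {0..1} (\<lambda>s. QQ w n s * Rf s)")
    case False
    then show ?thesis using rhs0
      by (simp add: set_lebesgue_integral_def set_integrable_def not_integrable_integral_eq)
  next
    case True
    define g where "g s = K * (\<Sum>i<n. cc w n i * indicator {aa n i..<aa n (Suc i)} s)" for s
    have gi: "integrable lborel g" unfolding g_def[abs_def]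
      by (intro integrable_mult_right int_sum_Ico(1)[OF n])
    have gv: "integral\<^sup>L lborel g = K * (\<Sum>i<n. cc w n i * (1 / (2 * real n)))"
      unfolding g_def[abs_def] 
      apply (subst integral_mult_right_zero)
      apply (subst int_sum_Ico(2)[OF n])
      apply (rule refl)
      done
    have pw: "indicator {0..1} s *\<^sub>R (QQ w n s * Rf s) \<le> g s" if s1: "s \<noteq> 1" for s
    proof -
      have g0: "0 \<le> g s" unfolding g_def using K c0 by (intro mult_nonneg_nonneg sum_nonneg) auto
      consider "s \<notin> {0..1}" | "s \<in> {0..<1}" "s < 1/2" | "1/2 \<le> s" "s < 1" using s1 by fastforce
      then show ?thesis
      proof cases
        case 1 then show ?thesis using g0 by (auto simp: indicator_def)
      next
        case 2 then show ?thesis using g0 QQ_low[OF n, of s w] by simp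
      next
        case 3
        obtain i where i: "i < n" "s \<in> {aa n i..<aa n (Suc i)}" using idx_exists[OF n 3] by blast
        have gs: "g s = K * cc w n i" unfolding g_def
          by (subst sum_collapse[where I="\<lambda>j. {aa n j..<aa n (Suc j)}", OF i]) (use Ico_disj[OF n] i in auto)
        have "QQ w n s * Rf s \<le> cc w n i * K"
          using QQ_eval[OF n i, of w] R[of s] 3 c0[OF i(1)] by (simp add: mult_left_mono)
        then show ?thesis using gs 3 by (simp add: mult.commute)
      qed
    qed
    have "(LINT s:{0..1}|lborel. QQ w n s * Rf s) \<le> integral\<^sup>L lborel g"
      unfolding set_lebesgue_integral_def
      by (rule integral_mono_AE[OF True[unfolded set_integrable_def] gi])
         (use AE_lborel_singleton[of 1] in \<open>eventually_elim, use pw in auto\<close>)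
    then show ?thesis using gv by simp
  qed
qed



lemma term_ineq:
  fixes h g b l K :: real
  assumes "0 \<le> h"
  shows "(g/2 - b)\<^sup>2 * h + l*K*(g/2*h) - g/2*(g*h) \<le> -(g\<^sup>2*h)/8 + h*(2*(l*K/2-b)\<^sup>2 + b\<^sup>2)"
proof -
  have sq: "0 \<le> (g/2 - 2*(l*K/2-b))\<^sup>2" by simp
  have br: "(g/2 - b)\<^sup>2 + l*K*(g/2) - g/2*g \<le> -(g\<^sup>2)/8 + (2*(l*K/2-b)\<^sup>2 + b\<^sup>2)"
    using sq by (simp add: power2_eq_square algebra_simps)
  have "h * ((g/2 - b)\<^sup>2 + l*K*(g/2) - g/2*g) \<le> h * (-(g\<^sup>2)/8 + (2*(l*K/2-b)\<^sup>2 + b\<^sup>2))"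
    by (rule mult_left_mono[OF br assms])
  then show ?thesis by (simp add: algebra_simps)
qed

theorem lemma5p2:
  fixes M :: "'a measure" and \<rho> X0 :: "'a \<Rightarrow> real" and beta lam :: real
    and w :: "real \<Rightarrow> real"
  assumes "prob_space M" and "complete_measure M" and "nonatomic M"
    and "\<rho> \<in> borel_measurable M" and "integrable M (\<lambda>x. (\<rho> x)\<^sup>2)"
    and "AE x in M. \<rho> x > 0" and "prob_space.variance M \<rho> > 0"
    and "X0 \<in> borel_measurable M" and "\<exists>C. AE x in M. \<bar>X0 x\<bar> \<le> C"
    and "lam > 0"
    and "w \<in> Wicx"
    and "(w \<longlongrightarrow> w 1) (at_left 1)"
    and "\<not> set_integrable lborel {0..<1} (\<lambda>s. (rderiv w s)\<^sup>2)"
  shows "\<forall>B::real. \<exists>Q\<in>Qset. set_integrable (wmeasure w) {0..1} Q \<and> Lfun M \<rho> X0 Q w beta lam < B"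
proof
  fix B :: real
  have w: "w \<in> Wicx" by fact
  obtain K where K: "K \<ge> 0" "\<And>t. t\<in>{0..1/2} \<Longrightarrow> quantile0 M \<rho> t \<le> K"
    using quant_bound[OF assms(1,4,6)] by blast
  define Rf where "Rf s = quantile M \<rho> (1 - s)" for s
  have R: "Rf s \<le> K" if "s \<in> {1/2..1}" for s
    using K(2)[of "1 - s"] that by (auto simp: Rf_def quantile_def)
  define C0 where "C0 = (LINT s:{0..1}|wmeasure w. quantile M X0 s)"
  define Mc where "Mc = 2*(lam*K/2 - beta)\<^sup>2 + beta\<^sup>2"
  obtain n where n: "n \<ge> 1" and nS: "SS w n > 8*(beta\<^sup>2 + C0 + Mc/2 - B)"
    using core[OF w assms(13)] by blast
  define h where "h = 1 / (2 * real n)"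
  have h0: "0 \<le> h" by (simp add: h_def)
  define A1 where "A1 = (\<Sum>i<n. (cc w n i - beta)\<^sup>2 * h)"
  define A2 where "A2 = K * (\<Sum>i<n. cc w n i * h)"
  define A3 where "A3 = (\<Sum>i<n. cc w n i * (w (aa n (Suc i)) - w (aa n i)))"
  have i1: "(LINT s:{0..1}|lborel. (QQ w n s - beta)\<^sup>2) \<le> beta\<^sup>2 + A1"
    using I1[OF w n, of beta] by (simp add: A1_def h_def)
  have i2: "(LINT s:{0..1}|lborel. QQ w n s * Rf s) \<le> A2"
    using I2[OF w n K(1) R] by (simp add: A2_def h_def)
  have i3: "A3 \<le> (LINT s:{0..1}|wmeasure w. QQ w n s)"
    using I3(2)[OF w n] by (simp add: A3_def)
  have dw: "w (aa n (Suc i)) - w (aa n i) = gg w n i * h" for i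
    using n by (simp add: gg_def h_def)
  have "A1 + lam * A2 - A3 = (\<Sum>i<n. (cc w n i - beta)\<^sup>2 * h + lam*K*(cc w n i * h) - cc w n i * (gg w n i * h))"
    unfolding A1_def A2_def A3_def dw
    by (simp add: sum_distrib_left sum.distrib sum_subtractf mult.assoc)
  also have "\<dots> \<le> (\<Sum>i<n. -((gg w n i)\<^sup>2 * h)/8 + h * Mc)"
    by (rule sum_mono) (use term_ineq[OF h0] in \<open>simp add: cc_def Mc_def\<close>)
  also have "\<dots> = -(\<Sum>i<n. (gg w n i)\<^sup>2 * h)/8 + real n * h * Mc"
    by (simp add: sum_subtractf sum_divide_distrib[symmetric])
  also have "(\<Sum>i<n. (gg w n i)\<^sup>2 * h) = SS w n"
    by (simp add: SS_def h_def)
  also have "real n * h = 1/2" using n by (simp add: h_def)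
  finally have key0: "A1 + lam * A2 - A3 \<le> - SS w n / 8 + 1/2 * Mc" by simp
  then have key: "A1 + lam * A2 - A3 \<le> - SS w n / 8 + Mc / 2" by simp
  have "Lfun M \<rho> X0 (QQ w n) w beta lam =
      (LINT s:{0..1}|lborel. (QQ w n s - beta)\<^sup>2) + lam * (LINT s:{0..1}|lborel. QQ w n s * Rf s)
      - ((LINT s:{0..1}|wmeasure w. QQ w n s) - C0)"
    by (simp add: Lfun_def Rf_def C0_def)
  also have "\<dots> \<le> (beta\<^sup>2 + A1) + lam * A2 - (A3 - C0)"
    using i1 i3 mult_left_mono[OF i2, of lam] assms(10) by linarith
  also have "\<dots> < B"
  proof -
    have "beta\<^sup>2 + C0 + Mc/2 - B < SS w n / 8" using nS by simp
    then show ?thesis using key by linarith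
  qed
  finally have "Lfun M \<rho> X0 (QQ w n) w beta lam < B" .
  then show "\<exists>Q\<in>Qset. set_integrable (wmeasure w) {0..1} Q \<and> Lfun M \<rho> X0 Q w beta lam < B"
    using QQ_Qset[OF w n] I3(1)[OF w n] by blast
qed


end
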